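(* Let $E(\lambda,\eta,\xi)$ be analytic near $(\lambda_*,0,\xi_* )$ with $\lambda_*\in i\mathbb{R}$, $\xi_*\in\mathbb{R}$, $E(\lambda_*,0,\xi_* )=0$, $E(\lambda,-\eta,\xi)=E(\lambda,\eta,\xi)$, and expand $E=a_{(1,0,0)}(\lambda-\lambda_* )+a_{(0,2,0)}\eta^2+a_{(0,0,1)}(\xi-\xi_* )+O(|\lambda-\lambda_*|+|\eta|^2+|\xi-\xi_*|)^2$ with $a_{(1,0,0)}\ne0$. Let $\lambda(\eta,\xi)$ be the unique zero of $E(\cdot,\eta,\xi)$ near $\lambda_*$ for real $(\eta,\xi)$ near $(0,\xi_* )$, and assume $\Re\partial_\xi\lambda(0,\xi_* )=0>\Re\partial_\xi^2\lambda(0,\xi_* )$. If $\Re\frac{a_{(0,2,0)}}{a_{(1,0,0)}}<0$, then $\Re\lambda(\eta,\xi_* )>0$ for all sufficiently small real $\eta\ne0$. If $\Re\frac{a_{(0,2,0)}}{a_{(1,0,0)}}>0$, then $\Re\lambda(\eta,\xi)$ attains a local maximum, equal to $0$, at $(\eta,\xi)=(0,\xi_* )$.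
   Context: In the paper, $E$ is the periodic Evans–Lopatinsky determinant of a planar roll wave of the inviscid Saint-Venant equations ($\eta$ transverse wavenumber, $\xi$ Floquet number) on the one-dimensional medium-frequency stability boundary, and $\lambda_*$ is a neutral spectral point. *)

theory Defs
  imports "HOL-Analysis.Analysis"
begin

definition holo3 ::
  "(complex \<Rightarrow> complex \<Rightarrow> complex \<Rightarrow> complex) \<Rightarrow> (complex \<times> complex \<times> complex) set \<Rightarrow> bool" where
  "holo3 E U \<longleftrightarrow> open U \<and>
     (\<forall>p\<in>U. \<exists>A B C. ((\<lambda>(x, y, z). E x y z) has_derivative
                        (\<lambda>(u, v, w). A * u + B * v + C * w)) (at p))"

end

theory Submission
  imports Defs "HOL-Complex_Analysis.Complex_Analysis"
begin

lemma cauchy_d1: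
  fixes g :: "complex \<Rightarrow> complex"
  assumes hg: "g holomorphic_on ball c \<rho>" and cg: "continuous_on (cball c \<rho>) g" and rp: "0 < \<rho>"
    and bd: "\<And>w. norm (c - w) = \<rho> \<Longrightarrow> norm (g w - (\<alpha> + \<beta>*w)) \<le> B"
  shows "norm (deriv g c - \<beta>) \<le> B / \<rho>"
proof -
  let ?k = "\<lambda>w. g w - (\<alpha> + \<beta>*w)"
  have hk: "?k holomorphic_on ball c \<rho>" using hg by (intro holomorphic_intros)
  have ck: "continuous_on (cball c \<rho>) ?k" using cg by (intro continuous_intros)
  have "norm ((deriv ^^ 1) ?k c) \<le> fact 1 * B / \<rho>^1"
    by (rule Cauchy_inequality[OF hk ck rp]) (use bd in auto)
  moreover have "(g has_field_derivative deriv g c) (at c)"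
    using holomorphic_derivI[OF hg] rp by auto
  then have "(?k has_field_derivative deriv g c - \<beta>) (at c)"
    by (auto intro!: derivative_eq_intros)
  then have "deriv ?k c = deriv g c - \<beta>" by (rule DERIV_imp_deriv)
  ultimately show ?thesis by simp
qed

lemma cauchy_d2:
  fixes g :: "complex \<Rightarrow> complex"
  assumes hg: "g holomorphic_on ball c \<rho>" and cg: "continuous_on (cball c \<rho>) g" and rp: "0 < \<rho>"
    and bd: "\<And>w. norm (c - w) = \<rho> \<Longrightarrow> norm (g w) \<le> B"
  shows "norm (deriv (deriv g) c) \<le> 2 * B / \<rho>^2"
proof -
  have "norm ((deriv ^^ 2) g c) \<le> fact 2 * B / \<rho>^2"
    by (rule Cauchy_inequality[OF hg cg rp]) (use bd in auto)
  then show ?thesis by (simp add: numeral_2_eq_2)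
qed

lemma slice_A:
  fixes E :: "complex \<Rightarrow> complex \<Rightarrow> complex \<Rightarrow> complex"
  assumes d: "((\<lambda>(x,y,z). E x y z) has_derivative (\<lambda>(u,v,w). A * u + B * v + G * w)) (at (x,y,z))"
  shows "((\<lambda>w. E w y z) has_field_derivative A) (at x)"
proof -
  have p: "((\<lambda>w. (w,y,z)) has_derivative (\<lambda>u. (u,0,0))) (at x)"
    by (intro derivative_eq_intros) auto
  have "((\<lambda>w. (\<lambda>(x,y,z). E x y z) (w,y,z)) has_derivative (\<lambda>u. (\<lambda>(u,v,w). A * u + B * v + G * w) (u,0,0))) (at x)"
    using has_derivative_compose[OF p d] by simp
  thus ?thesis
    unfolding has_field_derivative_def by (simp add: mult.commute[of _ "A"])
qed

context
  fixes E :: "complex \<Rightarrow> complex \<Rightarrow> complex \<Rightarrow> complex"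
    and L X a100 a020 a001 :: complex and C r2 :: real
  assumes r2: "0 < r2" and Cnn: "0 \<le> C" and a100: "a100 \<noteq> 0"
    and dif: "\<And>x y z. norm (x-L) < r2 \<Longrightarrow> norm y < r2 \<Longrightarrow> norm (z-X) < r2 \<Longrightarrow>
       \<exists>A B G. ((\<lambda>(x,y,z). E x y z) has_derivative (\<lambda>(u,v,w). A * u + B * v + G * w)) (at (x,y,z))"
    and evn: "\<And>x y z. norm (x-L) < r2 \<Longrightarrow> norm y < r2 \<Longrightarrow> norm (z-X) < r2 \<Longrightarrow> E x (-y) z = E x y z"
    and expn: "\<And>x y z. norm (x-L) < r2 \<Longrightarrow> norm y < r2 \<Longrightarrow> norm (z-X) < r2 \<Longrightarrow>
       norm (E x y z - (a100*(x-L) + a020*y^2 + a001*(z-X))) \<le> C*(norm (x-L) + norm y^2 + norm (z-X))^2"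
begin

lemma slice_x:
  assumes "norm (x-L) < r2" "norm y < r2" "norm (z-X) < r2"
  shows "(\<lambda>w. E w y z) field_differentiable (at x)"
proof -
  obtain A B G where d: "((\<lambda>(x,y,z). E x y z) has_derivative (\<lambda>(u,v,w). A * u + B * v + G * w)) (at (x,y,z))"
    using dif[OF assms] by blast
  have p: "((\<lambda>w. (w,y,z)) has_derivative (\<lambda>u. (u,0,0))) (at x)"
    by (intro derivative_eq_intros) auto
  have "((\<lambda>w. (\<lambda>(x,y,z). E x y z) (w,y,z)) has_derivative (\<lambda>u. (\<lambda>(u,v,w). A * u + B * v + G * w) (u,0,0))) (at x)"
    using has_derivative_compose[OF p d] by simp
  hence "((\<lambda>w. E w y z) has_field_derivative A) (at x)"
    unfolding has_field_derivative_def by (simp add: mult.commute[of _ "A"] mult.commute[of _ "B"] mult.commute[of _ "G"])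
  thus ?thesis by (auto simp: field_differentiable_def)
qed

lemma slice_y:
  assumes "norm (x-L) < r2" "norm y < r2" "norm (z-X) < r2"
  shows "(\<lambda>w. E x w z) field_differentiable (at y)"
proof -
  obtain A B G where d: "((\<lambda>(x,y,z). E x y z) has_derivative (\<lambda>(u,v,w). A * u + B * v + G * w)) (at (x,y,z))"
    using dif[OF assms] by blast
  have p: "((\<lambda>w. (x,w,z)) has_derivative (\<lambda>u. (0,u,0))) (at y)"
    by (intro derivative_eq_intros) auto
  have "((\<lambda>w. (\<lambda>(x,y,z). E x y z) (x,w,z)) has_derivative (\<lambda>u. (\<lambda>(u,v,w). A * u + B * v + G * w) (0,u,0))) (at y)"
    using has_derivative_compose[OF p d] by simp
  hence "((\<lambda>w. E x w z) has_field_derivative B) (at y)"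
    unfolding has_field_derivative_def by (simp add: mult.commute[of _ "A"] mult.commute[of _ "B"] mult.commute[of _ "G"])
  thus ?thesis by (auto simp: field_differentiable_def)
qed

lemma slice_z:
  assumes "norm (x-L) < r2" "norm y < r2" "norm (z-X) < r2"
  shows "(\<lambda>w. E x y w) field_differentiable (at z)"
proof -
  obtain A B G where d: "((\<lambda>(x,y,z). E x y z) has_derivative (\<lambda>(u,v,w). A * u + B * v + G * w)) (at (x,y,z))"
    using dif[OF assms] by blast
  have p: "((\<lambda>w. (x,y,w)) has_derivative (\<lambda>u. (0,0,u))) (at z)"
    by (intro derivative_eq_intros) auto
  have "((\<lambda>w. (\<lambda>(x,y,z). E x y z) (x,y,w)) has_derivative (\<lambda>u. (\<lambda>(u,v,w). A * u + B * v + G * w) (0,0,u))) (at z)"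
    using has_derivative_compose[OF p d] by simp
  hence "((\<lambda>w. E x y w) has_field_derivative G) (at z)"
    unfolding has_field_derivative_def by (simp add: mult.commute[of _ "A"] mult.commute[of _ "B"] mult.commute[of _ "G"])
  thus ?thesis by (auto simp: field_differentiable_def)
qed

lemma holo_x: "(\<And>w. w \<in> S \<Longrightarrow> norm (w-L) < r2) \<Longrightarrow> norm y < r2 \<Longrightarrow> norm (z-X) < r2 \<Longrightarrow>
   (\<lambda>w. E w y z) holomorphic_on S"
  by (simp add: holomorphic_on_def field_differentiable_at_within slice_x)
lemma holo_y: "norm (x-L) < r2 \<Longrightarrow> (\<And>w. w \<in> S \<Longrightarrow> norm w < r2) \<Longrightarrow> norm (z-X) < r2 \<Longrightarrow>
   (\<lambda>w. E x w z) holomorphic_on S"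
  by (simp add: holomorphic_on_def field_differentiable_at_within slice_y)
lemma holo_z: "norm (x-L) < r2 \<Longrightarrow> norm y < r2 \<Longrightarrow> (\<And>w. w \<in> S \<Longrightarrow> norm (w-X) < r2) \<Longrightarrow>
   (\<lambda>w. E x y w) holomorphic_on S"
  by (simp add: holomorphic_on_def field_differentiable_at_within slice_z)

lemma errb:
  assumes "norm (x-L) < r2" "norm y < r2" "norm (z-X) < r2" "norm (x-L) + norm y^2 + norm (z-X) \<le> t"
  shows "norm (E x y z - (a100*(x-L) + a020*y^2 + a001*(z-X))) \<le> C*t^2"
proof -
  have "(norm (x-L) + norm y^2 + norm (z-X))^2 \<le> t^2"
    by (rule power_mono[OF assms(4)]) simp
  then have "C*(norm (x-L) + norm y^2 + norm (z-X))^2 \<le> C*t^2"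
    by (rule mult_left_mono[OF _ Cnn])
  with expn[OF assms(1-3)] show ?thesis by linarith
qed

lemma dx_bound:
  assumes s: "0 < s" "2* s < r2" and y: "norm y ^2 \<le> s" "norm y < r2" and z: "norm (z-X) \<le> s"
    and x: "norm (x-L) \<le> s"
  shows "norm (deriv (\<lambda>w. E w y z) x - a100) \<le> 16*C* s"
proof -
  have zr: "norm (z-X) < r2" using z s by linarith
  have inr: "norm (w-L) < r2" if "w \<in> cball x s" for w
  proof -
    have "norm (w-L) \<le> norm (w-x) + norm (x-L)" using norm_triangle_ineq[of "w-x" "x-L"] by simp
    moreover have "norm (w-x) \<le> s" using that by (simp add: dist_norm norm_minus_commute)
    ultimately show ?thesis using x s by linarith
  qed
  have h: "(\<lambda>w. E w y z) holomorphic_on ball x s"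
    by (rule holo_x) (use inr y zr in auto)
  have c: "continuous_on (cball x s) (\<lambda>w. E w y z)"
    by (rule holomorphic_on_imp_continuous_on, rule holo_x) (use inr y zr in auto)
  have "norm (deriv (\<lambda>w. E w y z) x - a100) \<le> (16*C* s^2) / s"
  proof (rule cauchy_d1[OF h c s(1), where \<alpha> = "- a100*L + a020*y^2 + a001*(z-X)"])
    fix w assume w: "norm (x - w) = s"
    have wl: "norm (w-L) \<le> 2* s"
    proof -
      have "norm (w-L) \<le> norm (w-x) + norm (x-L)" using norm_triangle_ineq[of "w-x" "x-L"] by simp
      moreover have "norm (w-x) = s" using w by (simp add: norm_minus_commute)
      ultimately show ?thesis using x by linarith
    qed
    have b: "norm (E w y z - (a100*(w-L) + a020*y^2 + a001*(z-X))) \<le> C*(4* s)^2"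
      by (rule errb) (use wl y z s inr[of w] w in \<open>auto simp: dist_norm\<close>)
    have eq: "E w y z - (- a100*L + a020*y^2 + a001*(z-X) + a100*w) = E w y z - (a100*(w-L) + a020*y^2 + a001*(z-X))"
      by (simp add: algebra_simps)
    have c16: "C*(4* s)^2 = 16*C* s^2" by (simp add: power2_eq_square)
    show "norm (E w y z - (- a100*L + a020*y^2 + a001*(z-X) + a100*w)) \<le> 16*C* s^2"
      unfolding eq using b c16 by linarith
  qed
  also have "(16*C* s^2) / s = 16*C* s" using s by (simp add: power2_eq_square)
  finally show ?thesis .
qed

lemma mvt_x:
  assumes s: "0 < s" "2* s < r2" and y: "norm y ^2 \<le> s" "norm y < r2" and z: "norm (z-X) \<le> s"
    and x0: "norm (x0-L) \<le> s" and x1: "norm (x1-L) \<le> s"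
  shows "norm (E x1 y z - E x0 y z - a100*(x1-x0)) \<le> 16*C* s*norm (x1-x0)"
proof -
  have zr: "norm (z-X) < r2" using z s by linarith
  have "norm ((\<lambda>w. E w y z - a100*w) x1 - (\<lambda>w. E w y z - a100*w) x0) \<le> 16*C* s * norm (x1 - x0)"
  proof (rule field_differentiable_bound[where S = "cball L s" and f' = "\<lambda>w. deriv (\<lambda>w. E w y z) w - a100"])
    show "convex (cball L s)" by simp
    show "x1 \<in> cball L s" "x0 \<in> cball L s" using x0 x1 by (auto simp: dist_norm norm_minus_commute)
  next
    fix w assume "w \<in> cball L s"
    then have w: "norm (w-L) \<le> s" by (simp add: dist_norm norm_minus_commute)
    then have "(\<lambda>w. E w y z) field_differentiable (at w)"
      using slice_x[of w y z] s y zr by auto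
    then have "((\<lambda>w. E w y z) has_field_derivative deriv (\<lambda>w. E w y z) w) (at w)"
      using DERIV_deriv_iff_field_differentiable by blast
    then have "((\<lambda>w. E w y z - a100*w) has_field_derivative deriv (\<lambda>w. E w y z) w - a100) (at w)"
      by (auto intro!: derivative_eq_intros)
    then show "((\<lambda>w. E w y z - a100*w) has_field_derivative deriv (\<lambda>w. E w y z) w - a100) (at w within cball L s)"
      by (rule has_field_derivative_at_within)
    show "norm (deriv (\<lambda>w. E w y z) w - a100) \<le> 16*C* s"
      by (rule dx_bound) (use s y z w in auto)
  qed
  then show ?thesis by (simp add: algebra_simps)
qed

lemma exists_zero:
  assumes y: "norm y < r2" and z: "norm (z-X) < r2"
    and K: "K = (norm a020 + norm a001)/norm a100 + 1"
    and s1: "K*(norm y^2 + norm (z-X)) < r2"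
    and s2: "C*(K+1)^2*(norm y^2 + norm (z-X)) \<le> norm a100"
  shows "\<exists>x. norm (x-L) \<le> K*(norm y^2 + norm (z-X)) \<and> E x y z = 0"
proof -
  define \<sigma> where "\<sigma> = norm y^2 + norm (z-X)"
  have sg: "0 \<le> \<sigma>" by (simp add: \<sigma>_def)
  have K1: "1 \<le> K" using K by simp
  define S where "S = cball L (K*\<sigma>)"
  have inr: "norm (w-L) < r2" if "w \<in> S" for w
    using that s1 by (simp add: S_def \<sigma>_def dist_norm norm_minus_commute)
  have cE: "continuous_on S (\<lambda>w. E w y z)"
    by (rule holomorphic_on_imp_continuous_on, rule holo_x) (use inr y z in auto)
  let ?T = "\<lambda>w. w - E w y z / a100"
  have cT: "continuous_on S ?T" by (intro continuous_intros cE) (use a100 in auto)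
  have na: "0 < norm a100" using a100 by simp
  have fim: "?T \<in> S \<rightarrow> S"
  proof
    fix w assume wS: "w \<in> S"
    then have wl: "norm (w-L) \<le> K*\<sigma>" by (simp add: S_def dist_norm norm_minus_commute)
    define er where "er = E w y z - (a100*(w-L) + a020*y^2 + a001*(z-X))"
    have er: "norm er \<le> C*((K+1)*\<sigma>)^2"
      unfolding er_def by (rule errb) (use inr[OF wS] y z wl in \<open>auto simp: \<sigma>_def algebra_simps\<close>)
    have eq: "?T w - L = - (a020*y^2 + a001*(z-X) + er) / a100"
      using a100 by (simp add: er_def field_simps)
    have "norm (a020*y^2 + a001*(z-X) + er) \<le> norm a020 * \<sigma> + norm a001 * \<sigma> + C*((K+1)*\<sigma>)^2"
    proof -
      have "norm (a020*y^2) \<le> norm a020 * \<sigma>"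
        by (simp add: norm_mult norm_power \<sigma>_def mult_left_mono)
      moreover have "norm (a001*(z-X)) \<le> norm a001 * \<sigma>"
        by (simp add: norm_mult \<sigma>_def mult_left_mono)
      ultimately show ?thesis using er norm_triangle_ineq[of "a020*y^2 + a001*(z-X)" er]
        norm_triangle_ineq[of "a020*y^2" "a001*(z-X)"] by linarith
    qed
    also have "\<dots> \<le> norm a020 * \<sigma> + norm a001 * \<sigma> + norm a100 * \<sigma>"
    proof -
      have "C*((K+1)*\<sigma>)^2 = (C*(K+1)^2*\<sigma>)*\<sigma>" by (simp add: power2_eq_square)
      also have "\<dots> \<le> norm a100 * \<sigma>" using s2 sg by (simp add: \<sigma>_def mult_right_mono)
      finally show ?thesis by simp
    qed
    also have "\<dots> = norm a100 * (K*\<sigma>)"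
    proof -
      have Ka: "K * norm a100 = norm a020 + norm a001 + norm a100" using na K by (simp add: field_simps)
      have "norm a100 * (K*\<sigma>) = (K * norm a100) * \<sigma>" by simp
      then show ?thesis by (simp add: Ka distrib_right)
    qed
    finally have n1: "norm (a020*y^2 + a001*(z-X) + er) \<le> norm a100 * (K*\<sigma>)" .
    have "norm (?T w - L) = norm (a020*y^2 + a001*(z-X) + er) / norm a100"
      by (simp only: eq norm_divide norm_minus_cancel)
    then have "norm (?T w - L) \<le> K*\<sigma>" using n1 na by (simp add: divide_le_eq mult.commute)
    then show "?T w \<in> S" by (simp add: S_def dist_norm norm_minus_commute)
  qed
  have "compact S" "convex S" "S \<noteq> {}" using sg K1 by (auto simp: S_def not_less)
  then obtain x where "x \<in> S" "?T x = x" using brouwer[OF _ _ _ cT fim] by blast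
  then show ?thesis using a100 by (auto simp: S_def \<sigma>_def dist_norm norm_minus_commute)
qed

lemma mvt_z:
  assumes s: "0 < s" "3 * s < r2" and x: "norm (x-L) \<le> s"
    and z0: "norm (z0-X) \<le> s" and z1: "norm (z1-X) \<le> s"
  shows "norm (E x 0 z1 - E x 0 z0) \<le> (norm a001 + 9*C * s) * norm (z1-z0)"
proof (rule field_differentiable_bound[where S = "cball X s" and f' = "\<lambda>w. deriv (\<lambda>w. E x 0 w) w"])
  show "convex (cball X s)" by simp
  show "z1 \<in> cball X s" "z0 \<in> cball X s" using z0 z1 by (auto simp: dist_norm norm_minus_commute)
next
  fix z assume "z \<in> cball X s"
  then have z: "norm (z-X) \<le> s" by (simp add: dist_norm norm_minus_commute)
  have xr: "norm (x-L) < r2" using x s by linarith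
  have "(\<lambda>w. E x 0 w) field_differentiable (at z)"
    using slice_z[of x 0 z] s xr z r2 by auto
  then have "((\<lambda>w. E x 0 w) has_field_derivative deriv (\<lambda>w. E x 0 w) z) (at z)"
    using DERIV_deriv_iff_field_differentiable by blast
  then show "((\<lambda>w. E x 0 w) has_field_derivative deriv (\<lambda>w. E x 0 w) z) (at z within cball X s)"
    by (rule has_field_derivative_at_within)
  have inr: "norm (w-X) < r2" if "w \<in> cball z s" for w
  proof -
    have "norm (w-X) \<le> norm (w-z) + norm (z-X)" using norm_triangle_ineq[of "w-z" "z-X"] by simp
    moreover have "norm (w-z) \<le> s" using that by (simp add: dist_norm norm_minus_commute)
    ultimately show ?thesis using z s by linarith
  qed
  have h: "(\<lambda>w. E x 0 w) holomorphic_on ball z s"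
    by (rule holo_z) (use inr xr r2 in auto)
  have c: "continuous_on (cball z s) (\<lambda>w. E x 0 w)"
    by (rule holomorphic_on_imp_continuous_on, rule holo_z) (use inr xr r2 in auto)
  have "norm (deriv (\<lambda>w. E x 0 w) z - a001) \<le> (9*C* s^2) / s"
  proof (rule cauchy_d1[OF h c s(1), where \<alpha> = "a100*(x-L) - a001*X"])
    fix w assume w: "norm (z - w) = s"
    have wl: "norm (w-X) \<le> 2 * s"
    proof -
      have "norm (w-X) \<le> norm (w-z) + norm (z-X)" using norm_triangle_ineq[of "w-z" "z-X"] by simp
      moreover have "norm (w-z) = s" using w by (simp add: norm_minus_commute)
      ultimately show ?thesis using z by linarith
    qed
    have b: "norm (E x 0 w - (a100*(x-L) + a020*0^2 + a001*(w-X))) \<le> C*(3* s)^2"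
      by (rule errb) (use wl x s inr[of w] w r2 in \<open>auto simp: dist_norm\<close>)
    have eq: "E x 0 w - (a100*(x-L) - a001*X + a001*w) = E x 0 w - (a100*(x-L) + a020*0^2 + a001*(w-X))"
      by (simp add: algebra_simps)
    have c9: "C*(3* s)^2 = 9*C* s^2" by (simp add: power2_eq_square)
    show "norm (E x 0 w - (a100*(x-L) - a001*X + a001*w)) \<le> 9*C* s^2"
      unfolding eq using b c9 by linarith
  qed
  also have "(9*C* s^2) / s = 9*C* s" using s by (simp add: power2_eq_square)
  finally have "norm (deriv (\<lambda>w. E x 0 w) z - a001) \<le> 9*C* s" .
  then show "norm (deriv (\<lambda>w. E x 0 w) z) \<le> norm a001 + 9*C* s"
    using norm_triangle_ineq[of "deriv (\<lambda>w. E x 0 w) z - a001" a001] by simp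
qed

lemma dy_bound:
  assumes R: "0 < R" "R < r2" "2*R^2 < r2" and x: "norm (x-L) \<le> R^2" and z: "norm (z-X) \<le> R^2"
    and y: "norm y < R/2"
  shows "norm (E x y z - E x 0 z - a020*y^2) \<le> 104*C*R^2 * norm y^2"
proof -
  define \<phi> where "\<phi> = (\<lambda>w. E x w z - E x 0 z - a020*w^2)"
  have xr: "norm (x-L) < r2" and zr: "norm (z-X) < r2" using x z R by auto
  have hE: "(\<lambda>w. E x w z) holomorphic_on ball 0 R"
    by (rule holo_y) (use xr zr R in auto)
  have h: "\<phi> holomorphic_on ball 0 R" unfolding \<phi>_def by (intro holomorphic_intros hE)
  have ob: "open (ball (0::complex) R)" by simp
  have bnd: "norm (\<phi> w) \<le> 13*C*R^4" if w: "norm w \<le> R" for w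
  proof -
    have wr: "norm w < r2" using w R by linarith
    have b1: "norm (E x w z - (a100*(x-L) + a020*w^2 + a001*(z-X))) \<le> C*(3*R^2)^2"
    proof (rule errb[OF xr wr zr])
      have "norm w^2 \<le> R^2" by (rule power_mono) (use w in auto)
      then show "norm (x-L) + norm w^2 + norm (z-X) \<le> 3*R^2" using x z by linarith
    qed
    have b2: "norm (E x 0 z - (a100*(x-L) + a020*0^2 + a001*(z-X))) \<le> C*(2*R^2)^2"
      by (rule errb) (use xr zr x z R in auto)
    have eq: "\<phi> w = (E x w z - (a100*(x-L) + a020*w^2 + a001*(z-X))) - (E x 0 z - (a100*(x-L) + a020*0^2 + a001*(z-X)))"
      by (simp add: \<phi>_def algebra_simps)
    have "norm (\<phi> w) \<le> C*(3*R^2)^2 + C*(2*R^2)^2"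
      unfolding eq using b1 b2 norm_triangle_ineq4[of "E x w z - (a100*(x-L) + a020*w^2 + a001*(z-X))" "E x 0 z - (a100*(x-L) + a020*0^2 + a001*(z-X))"] by linarith
    also have "\<dots> = 13*C*R^4" by (simp add: power2_eq_square power4_eq_xxxx)
    finally show ?thesis .
  qed
  have d2: "norm (deriv (deriv \<phi>) u) \<le> 104*C*R^2" if u: "norm u < R/2" for u
  proof -
    have sub: "cball u (R/2) \<subseteq> ball 0 R"
    proof
      fix w assume "w \<in> cball u (R/2)"
      then have "norm (w-u) \<le> R/2" by (simp add: dist_norm norm_minus_commute)
      then have "norm w < R" using u norm_triangle_ineq[of "w-u" u] by simp
      then show "w \<in> ball 0 R" by simp
    qed
    have "norm (deriv (deriv \<phi>) u) \<le> 2 * (13*C*R^4) / (R/2)^2"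
    proof (rule cauchy_d2)
      show "\<phi> holomorphic_on ball u (R/2)" using h sub ball_subset_cball holomorphic_on_subset by blast
      show "continuous_on (cball u (R/2)) \<phi>"
        using holomorphic_on_imp_continuous_on[OF h] sub continuous_on_subset by blast
      show "0 < R/2" using R by simp
      fix w assume "norm (u - w) = R/2"
      then have "norm w \<le> R" using u norm_triangle_ineq[of "w-u" u] by (simp add: norm_minus_commute)
      then show "norm (\<phi> w) \<le> 13*C*R^4" by (rule bnd)
    qed
    also have "\<dots> = 104*C*R^2" using R by (simp add: power2_eq_square power4_eq_xxxx field_simps)
    finally show ?thesis .
  qed
  have hd: "deriv \<phi> holomorphic_on ball 0 R" by (rule holomorphic_deriv[OF h ob])
  have D1: "(\<phi> has_field_derivative deriv \<phi> w) (at w)" if "norm w < R" for w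
    using holomorphic_derivI[OF h ob, of w] that by simp
  have D2: "(deriv \<phi> has_field_derivative deriv (deriv \<phi>) w) (at w)" if "norm w < R" for w
    using holomorphic_derivI[OF hd ob, of w] that by simp
  have p0: "deriv \<phi> 0 = 0"
  proof -
    have "DERIV \<phi> (- 0) :> deriv \<phi> 0" using D1[of 0] R by simp
    moreover have "(uminus has_field_derivative -1) (at (0::complex))"
      by (auto intro!: derivative_eq_intros)
    ultimately have "DERIV (\<lambda>w. \<phi> (- w)) 0 :> deriv \<phi> 0 * (-1)" by (rule DERIV_chain2)
    then have "DERIV (\<lambda>w. \<phi> (- w)) 0 :> - deriv \<phi> 0" by simp
    moreover have "\<phi> (- w) = \<phi> w" if "w \<in> ball 0 R" for w
      using evn[of x w z] that xr zr R by (simp add: \<phi>_def)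
    ultimately have "DERIV \<phi> 0 :> - deriv \<phi> 0"
      using has_field_derivative_transform_within_open[of "\<lambda>w. \<phi> (-w)" _ 0 "ball 0 R" \<phi>] R by auto
    with D1[of 0] R have "deriv \<phi> 0 = - deriv \<phi> 0" using DERIV_unique by (metis norm_zero)
    then show ?thesis by simp
  qed
  have d1: "norm (deriv \<phi> u) \<le> 104*C*R^2 * norm u" if u: "norm u < R/2" for u
  proof -
    have "norm (deriv \<phi> u - deriv \<phi> 0) \<le> 104*C*R^2 * norm (u - 0)"
    proof (rule field_differentiable_bound[where S = "cball 0 (norm u)" and f' = "deriv (deriv \<phi>)"])
      show "convex (cball (0::complex) (norm u))" by simp
      show "u \<in> cball 0 (norm u)" "0 \<in> cball 0 (norm u)" by auto
    next
      fix v assume "v \<in> cball (0::complex) (norm u)"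
      then have v: "norm v < R/2" using u by simp
      show "(deriv \<phi> has_field_derivative deriv (deriv \<phi>) v) (at v within cball 0 (norm u))"
        using D2[of v] v R by (auto intro: has_field_derivative_at_within)
      show "norm (deriv (deriv \<phi>) v) \<le> 104*C*R^2" by (rule d2[OF v])
    qed
    then show ?thesis using p0 by simp
  qed
  have "norm (\<phi> y - \<phi> 0) \<le> (104*C*R^2 * norm y) * norm (y - 0)"
  proof (rule field_differentiable_bound[where S = "cball 0 (norm y)" and f' = "deriv \<phi>"])
    show "convex (cball (0::complex) (norm y))" by simp
    show "y \<in> cball 0 (norm y)" "0 \<in> cball 0 (norm y)" by auto
  next
    fix v assume "v \<in> cball (0::complex) (norm y)"
    then have v: "norm v \<le> norm y" by simp
    then have v2: "norm v < R/2" using y by simp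
    show "(\<phi> has_field_derivative deriv \<phi> v) (at v within cball 0 (norm y))"
      using D1[of v] v2 R by (auto intro: has_field_derivative_at_within)
    have "norm (deriv \<phi> v) \<le> 104*C*R^2 * norm v" by (rule d1[OF v2])
    also have "\<dots> \<le> 104*C*R^2 * norm y" using v Cnn by (intro mult_left_mono) auto
    finally show "norm (deriv \<phi> v) \<le> 104*C*R^2 * norm y" .
  qed
  moreover have "\<phi> 0 = 0" by (simp add: \<phi>_def)
  ultimately show ?thesis by (simp add: \<phi>_def power2_eq_square mult.assoc)
qed

lemma uniq:
  assumes s: "0 < s" "2 * s < r2" "16*C * s \<le> norm a100 / 2" and y: "norm y ^2 \<le> s" "norm y < r2"
    and z: "norm (z-X) \<le> s"
    and x0: "norm (x0-L) \<le> s" and x1: "norm (x1-L) \<le> s" and e0: "E x0 y z = 0" and e1: "E x1 y z = 0"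
  shows "x1 = x0"
proof -
  have "norm (a100*(x1-x0)) \<le> 16*C * s * norm (x1-x0)"
    using mvt_x[OF s(1,2) y z x0 x1] e0 e1 by (simp add: norm_minus_cancel)
  also have "\<dots> \<le> norm a100 / 2 * norm (x1-x0)" using s(3) by (intro mult_right_mono) auto
  finally have "norm a100 * norm (x1-x0) \<le> norm a100 / 2 * norm (x1-x0)" by (simp add: norm_mult)
  moreover have "0 < norm a100" using a100 by simp
  moreover have "norm a100 * norm (x1-x0) = 2 * (norm a100 / 2 * norm (x1-x0))" by simp
  ultimately have "norm a100 / 2 * norm (x1-x0) \<le> 0" by linarith
  then have "norm (x1-x0) \<le> 0" using \<open>0 < norm a100\<close> by (simp add: mult_le_0_iff)
  then show ?thesis by simp
qed

lemma implicit_h: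
  assumes s: "0 < s" "3 * s < r2" "16*C * s \<le> norm a100 / 2"
    and K: "K = (norm a020 + norm a001)/norm a100 + 1"
    and s3: "0 < s3" "K * s3 \<le> s" "C*(K+1)^2 * s3 \<le> norm a100"
  obtains h where "h holomorphic_on ball X s3"
    "\<And>z. z \<in> ball X s3 \<Longrightarrow> norm (h z - L) \<le> s \<and> E (h z) 0 z = 0"
proof -
  have na: "0 < norm a100" using a100 by simp
  have K1: "1 \<le> K" using K by simp
  have "s3 \<le> K * s3" using K1 s3(1) by simp
  then have s3s: "s3 \<le> s" using s3(2) by linarith
  have ex: "\<exists>x. norm (x-L) \<le> s \<and> E x 0 z = 0" if z: "z \<in> ball X s3" for z
  proof -
    have zz: "norm (z-X) < s3" using z by (simp add: dist_norm norm_minus_commute)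
    have Kz: "K * norm (z-X) \<le> K * s3" using zz K1 by (intro mult_left_mono) auto
    have Cz: "C*(K+1)^2 * norm (z-X) \<le> C*(K+1)^2 * s3" using zz Cnn by (intro mult_left_mono) auto
    obtain x where "norm (x-L) \<le> K*(norm (0::complex)^2 + norm (z-X))" "E x 0 z = 0"
      using exists_zero[of 0 z K] r2 zz s3s s K Kz Cz s3 by auto
    then show ?thesis using Kz s3 by (intro exI[of _ x]) auto
  qed
  define h where "h z = (SOME x. norm (x-L) \<le> s \<and> E x 0 z = 0)" for z
  have hz: "norm (h z - L) \<le> s \<and> E (h z) 0 z = 0" if "z \<in> ball X s3" for z
    unfolding h_def using someI_ex[OF ex[OF that]] .
  define M where "M = norm a001 + 9*C * s"
  define Lh where "Lh = 2 * M / norm a100"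
  have Lh0: "0 \<le> Lh" using Cnn s na by (simp add: Lh_def M_def)
  have lip: "norm (h z1 - h z0) \<le> Lh * norm (z1 - z0)" if z0: "z0 \<in> ball X s3" and z1: "z1 \<in> ball X s3" for z0 z1
  proof -
    have z0s: "norm (z0-X) \<le> s" and z1s: "norm (z1-X) \<le> s"
      using z0 z1 s3s by (auto simp: dist_norm norm_minus_commute)
    note h0 = hz[OF z0] and h1 = hz[OF z1]
    have A: "norm (E (h z1) 0 z0 - E (h z0) 0 z0 - a100*(h z1 - h z0)) \<le> 16*C * s * norm (h z1 - h z0)"
      by (rule mvt_x) (use s r2 z0s h0 h1 in auto)
    have B: "norm (E (h z1) 0 z1 - E (h z1) 0 z0) \<le> M * norm (z1 - z0)"
      unfolding M_def by (rule mvt_z) (use s z0s z1s h1 in auto)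
    have "norm (a100*(h z1 - h z0)) \<le> norm (E (h z1) 0 z0) + norm (E (h z1) 0 z0 - E (h z0) 0 z0 - a100*(h z1 - h z0))"
      using h0 norm_triangle_ineq4[of "E (h z1) 0 z0" "E (h z1) 0 z0 - E (h z0) 0 z0 - a100*(h z1 - h z0)"] by simp
    also have "\<dots> \<le> M * norm (z1 - z0) + norm a100 / 2 * norm (h z1 - h z0)"
    proof -
      have "norm (E (h z1) 0 z0) \<le> M * norm (z1 - z0)" using B h1 by (simp add: norm_minus_cancel)
      moreover have "16*C * s * norm (h z1 - h z0) \<le> norm a100 / 2 * norm (h z1 - h z0)"
        using s(3) by (intro mult_right_mono) auto
      ultimately show ?thesis using A by linarith
    qed
    finally have "norm a100 / 2 * norm (h z1 - h z0) \<le> M * norm (z1 - z0)" by (simp add: norm_mult)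
    then show ?thesis using na by (simp add: Lh_def field_simps)
  qed
  have der: "\<exists>D. (h has_field_derivative D) (at z0)" if z0: "z0 \<in> ball X s3" for z0
  proof -
    define x0 where "x0 = h z0"
    have x0: "norm (x0 - L) \<le> s" "E x0 0 z0 = 0" using hz[OF z0] by (auto simp: x0_def)
    have z0s: "norm (z0-X) \<le> s" using z0 s3s by (auto simp: dist_norm norm_minus_commute)
    obtain A B G where d: "((\<lambda>(x,y,z). E x y z) has_derivative (\<lambda>(u,v,w). A * u + B * v + G * w)) (at (x0,0,z0))"
      using dif[of x0 0 z0] x0 z0s s r2 by auto
    have "deriv (\<lambda>w. E w 0 z0) x0 = A" using slice_A[OF d] by (rule DERIV_imp_deriv)
    moreover have "norm (deriv (\<lambda>w. E w 0 z0) x0 - a100) \<le> 16*C * s"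
      by (rule dx_bound) (use s r2 z0s x0 in auto)
    ultimately have "norm (A - a100) \<le> norm a100 / 2" using s(3) by simp
    then have nA: "norm a100 / 2 \<le> norm A"
      using norm_triangle_ineq2[of a100 A] by (simp add: norm_minus_commute)
    then have nA0: "0 < norm A" using na by linarith
    have "(h has_derivative (*) (- G / A)) (at z0)"
      unfolding has_derivative_at_alt
    proof (intro conjI allI impI)
      show "bounded_linear ((*) (- G / A))" by (rule bounded_linear_mult_right)
      fix e :: real assume e: "0 < e"
      define e' where "e' = e * norm A / (Lh + 1)"
      have e': "0 < e'" using e nA0 Lh0 by (simp add: e'_def)
      obtain d where d0: "0 < d" and dd: "\<And>p. norm (p - (x0,0,z0)) < d \<Longrightarrow>
          norm ((\<lambda>(x,y,z). E x y z) p - (\<lambda>(x,y,z). E x y z) (x0,0,z0) - (\<lambda>(u,v,w). A * u + B * v + G * w) (p - (x0,0,z0)))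
            \<le> e' * norm (p - (x0,0,z0))"
      proof -
        have "\<forall>e>0. \<exists>d>0. \<forall>p. norm (p - (x0,0,z0)) < d \<longrightarrow>
          norm ((\<lambda>(x,y,z). E x y z) p - (\<lambda>(x,y,z). E x y z) (x0,0,z0) - (\<lambda>(u,v,w). A * u + B * v + G * w) (p - (x0,0,z0)))
            \<le> e * norm (p - (x0,0,z0))"
          using d unfolding has_derivative_at_alt by (elim conjE) assumption
        then show ?thesis using e' that by blast
      qed
      define d' where "d' = min (d / (Lh + 1)) (s3 - dist X z0)"
      have d'0: "0 < d'" using d0 Lh0 z0 by (simp add: d'_def)
      show "\<exists>d>0. \<forall>z. norm (z - z0) < d \<longrightarrow> norm (h z - h z0 - (- G / A) * (z - z0)) \<le> e * norm (z - z0)"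
      proof (intro exI[of _ d'] conjI allI impI d'0)
        fix z assume zz: "norm (z - z0) < d'"
        have zb: "z \<in> ball X s3"
        proof -
          have "dist X z \<le> dist X z0 + dist z0 z" by (rule dist_triangle)
          then show ?thesis using zz by (simp add: d'_def dist_norm norm_minus_commute)
        qed
        have hl: "norm (h z - x0) \<le> Lh * norm (z - z0)" using lip[OF z0 zb] by (simp add: x0_def)
        have np: "norm ((h z, 0::complex, z) - (x0,0,z0)) \<le> (Lh + 1) * norm (z - z0)"
        proof -
          have "norm ((h z, 0::complex, z) - (x0,0,z0)) = norm (h z - x0, (0::complex), z - z0)" by simp
          also have "\<dots> \<le> norm (h z - x0) + norm ((0::complex), z - z0)" by (rule norm_Pair_le)
          also have "\<dots> \<le> norm (h z - x0) + (norm (0::complex) + norm (z - z0))"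
            using norm_Pair_le[of "0::complex" "z - z0"] by simp
          finally show ?thesis using hl by (simp add: algebra_simps)
        qed
        have "(Lh + 1) * norm (z - z0) < d"
        proof -
          have "norm (z - z0) < d / (Lh + 1)" using zz by (simp add: d'_def)
          then show ?thesis using Lh0 by (simp add: field_simps)
        qed
        with np have "norm ((h z, 0::complex, z) - (x0,0,z0)) < d" by linarith
        from dd[OF this] have
          "norm (E (h z) 0 z - E x0 0 z0 - (A * (h z - x0) + G * (z - z0))) \<le> e' * norm ((h z, 0::complex, z) - (x0,0,z0))"
          by simp
        also have "\<dots> \<le> e' * ((Lh + 1) * norm (z - z0))" using np e' by (intro mult_left_mono) auto
        also have "\<dots> = e * norm A * norm (z - z0)" using Lh0 by (simp add: e'_def field_simps)
        finally have ff: "norm (E (h z) 0 z - E x0 0 z0 - (A * (h z - x0) + G * (z - z0))) \<le> e * norm A * norm (z - z0)" .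
        have hE: "E (h z) 0 z = 0" using hz[OF zb] by simp
        have "norm (A * (h z - x0) + G * (z - z0)) \<le> e * norm A * norm (z - z0)"
          using ff by (simp only: hE x0(2) diff_self diff_0 norm_minus_cancel)
        moreover have "h z - h z0 - (- G / A) * (z - z0) = (A * (h z - x0) + G * (z - z0)) / A"
          using nA0 by (simp add: x0_def field_simps)
        ultimately show "norm (h z - h z0 - (- G / A) * (z - z0)) \<le> e * norm (z - z0)"
          using nA0 by (simp add: norm_divide divide_le_eq mult.commute mult.left_commute)
      qed
    qed
    then show ?thesis unfolding has_field_derivative_def by blast
  qed
  have "h holomorphic_on ball X s3"
    unfolding holomorphic_on_def
    using der by (meson field_differentiable_at_within field_differentiable_def)
  then show ?thesis using that hz by blast
qed

end
lemma alg2: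
  fixes a b d :: complex and t \<alpha> \<beta> :: real
  assumes a: "a \<noteq> 0" and t: "0 \<le> t" and b0: "0 \<le> \<beta>" and b1: "\<beta> \<le> norm a / 2"
    and h: "norm (a*d + b* of_real t) \<le> \<alpha>*t + \<beta>*norm d"
    and c: "2*(\<alpha> + \<beta>*norm (b/a)) \<le> Re (b/a) * norm a"
  shows "Re d \<le> 0"
proof -
  define q where "q = b/a"
  define e where "e = (a*d + b* of_real t)/a"
  have na: "0 < norm a" using a by simp
  have de: "d = e - q * of_real t" using a by (simp add: e_def q_def field_simps)
  have ne: "norm e \<le> (\<alpha>*t + \<beta>*norm d) / norm a"
    using h na by (simp add: e_def norm_divide divide_right_mono)
  have nd: "norm d \<le> norm e + norm q * t"
    using norm_triangle_ineq4[of e "q * of_real t"] t by (simp add: de norm_mult)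
  have "norm e * norm a \<le> \<alpha>*t + \<beta>*norm d" using ne na by (simp add: pos_le_divide_eq)
  also have "\<dots> \<le> \<alpha>*t + \<beta>*(norm e + norm q * t)" using nd b0 by (intro add_left_mono mult_left_mono) auto
  finally have "norm e * norm a \<le> \<alpha>*t + \<beta>*norm q * t + \<beta>*norm e" by (simp add: algebra_simps)
  moreover have "\<beta>*norm e \<le> norm a / 2 * norm e" using b1 by (intro mult_right_mono) auto
  ultimately have "norm e * norm a / 2 \<le> (\<alpha> + \<beta>*norm q) * t" by (simp add: algebra_simps)
  then have "norm e * norm a \<le> 2*(\<alpha> + \<beta>*norm q) * t" by (simp add: algebra_simps)
  also have "\<dots> \<le> Re q * norm a * t" using c t by (intro mult_right_mono) (auto simp: q_def)
  finally have "norm e \<le> Re q * t" using na by (simp add: mult.commute mult.left_commute)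
  moreover have "Re d = Re e - Re q * t" by (simp add: de)
  moreover have "Re e \<le> norm e" by (rule complex_Re_le_cmod)
  ultimately show ?thesis by linarith
qed

lemma alg1:
  fixes a b d :: complex and t \<gamma> :: real
  assumes a: "a \<noteq> 0" and t: "0 < t"
    and h: "norm (a*d + b* of_real t) \<le> \<gamma>*t^2"
    and c: "\<gamma>*t < - Re (b/a) * norm a"
  shows "0 < Re d"
proof -
  define q where "q = b/a"
  define e where "e = (a*d + b* of_real t)/a"
  have na: "0 < norm a" using a by simp
  have de: "d = e - q * of_real t" using a by (simp add: e_def q_def field_simps)
  have "norm e * norm a \<le> \<gamma>*t^2" using h na by (simp add: e_def norm_divide)
  also have "\<dots> = (\<gamma>*t)*t" by (simp add: power2_eq_square)
  also have "\<dots> < (- Re q * norm a) * t" using c t by (intro mult_strict_right_mono) (auto simp: q_def)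
  also have "\<dots> = (- Re q * t) * norm a" by simp
  finally have "norm e < - Re q * t" using mult_less_cancel_right_pos[OF na] by blast
  moreover have "Re d = Re e - Re q * t" by (simp add: de)
  moreover have "- norm e \<le> Re e" using abs_Re_le_cmod[of e] by linarith
  ultimately show ?thesis by linarith
qed

lemma hlp1: fixes c s b :: real shows "0 \<le> c \<Longrightarrow> 0 \<le> s \<Longrightarrow> s \<le> b/(c+1) \<Longrightarrow> c* s \<le> b"
proof -
  assume a: "0 \<le> c" "0 \<le> s" "s \<le> b/(c+1)"
  then have "s*(c+1) \<le> b" by (simp add: pos_le_divide_eq add_nonneg_pos)
  moreover have "c* s \<le> s*(c+1)" using a by (simp add: algebra_simps)
  ultimately show ?thesis by linarith
qed

lemma hlp1s: fixes c s b :: real shows "0 \<le> c \<Longrightarrow> 0 \<le> s \<Longrightarrow> s < b/(c+1) \<Longrightarrow> c* s < b"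
proof -
  assume a: "0 \<le> c" "0 \<le> s" "s < b/(c+1)"
  then have "s*(c+1) < b" by (simp add: pos_less_divide_eq add_nonneg_pos)
  moreover have "c* s \<le> s*(c+1)" using a by (simp add: algebra_simps)
  ultimately show ?thesis by linarith
qed

lemma hlp2: fixes K s b :: real shows "0 < K \<Longrightarrow> s < b/K \<Longrightarrow> K* s < b"
  by (simp add: pos_less_divide_eq mult.commute)

lemma hlp3: fixes K s b :: real shows "0 < K \<Longrightarrow> s \<le> b/K \<Longrightarrow> K* s \<le> b"
  by (simp add: pos_le_divide_eq mult.commute)

lemma sq_le_abs: fixes x :: real shows "\<bar>x\<bar> \<le> 1 \<Longrightarrow> x^2 \<le> \<bar>x\<bar>"
proof -
  assume "\<bar>x\<bar> \<le> 1"
  then have "\<bar>x\<bar> * \<bar>x\<bar> \<le> \<bar>x\<bar> * 1" by (intro mult_left_mono) auto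
  then show ?thesis by (simp add: power2_eq_square)
qed

theorem mainTheorem15:
  fixes E :: "complex \<Rightarrow> complex \<Rightarrow> complex \<Rightarrow> complex"
    and lamS :: complex and xiS :: real
    and a100 a020 a001 :: complex
    and lam :: "real \<Rightarrow> real \<Rightarrow> complex"
    and U :: "(complex \<times> complex \<times> complex) set"
  assumes holo: "holo3 E U"
    and inU: "(lamS, 0, complex_of_real xiS) \<in> U"
    and imag: "Re lamS = 0"
    and zero: "E lamS 0 (complex_of_real xiS) = 0"
    and even: "\<forall>x y z. (x, y, z) \<in> U \<longrightarrow> (x, - y, z) \<in> U \<and> E x (- y) z = E x y z"
    and expansion: "\<exists>C r. r > 0 \<and> (\<forall>x y z.
            norm (x - lamS) < r \<and> norm y < r \<and> norm (z - complex_of_real xiS) < r \<longrightarrow>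
            norm (E x y z - (a100 * (x - lamS) + a020 * y ^ 2 + a001 * (z - complex_of_real xiS)))
              \<le> C * (norm (x - lamS) + norm y ^ 2 + norm (z - complex_of_real xiS)) ^ 2)"
    and a100_nz: "a100 \<noteq> 0"
    and lam_root: "\<exists>\<delta> r. \<delta> > 0 \<and> r > 0 \<and> (\<forall>\<eta> \<xi>. \<bar>\<eta>\<bar> < \<delta> \<and> \<bar>\<xi> - xiS\<bar> < \<delta> \<longrightarrow>
            norm (lam \<eta> \<xi> - lamS) < r \<and>
            E (lam \<eta> \<xi>) (complex_of_real \<eta>) (complex_of_real \<xi>) = 0 \<and>
            (\<forall>z. norm (z - lamS) < r \<and> E z (complex_of_real \<eta>) (complex_of_real \<xi>) = 0
                   \<longrightarrow> z = lam \<eta> \<xi>))"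
    and d1: "deriv (\<lambda>\<xi>. Re (lam 0 \<xi>)) xiS = 0"
    and d2: "deriv (deriv (\<lambda>\<xi>. Re (lam 0 \<xi>))) xiS < 0"
  shows "(Re (a020 / a100) < 0 \<longrightarrow>
            (\<exists>\<delta>>0. \<forall>\<eta>::real. \<eta> \<noteq> 0 \<and> \<bar>\<eta>\<bar> < \<delta> \<longrightarrow> Re (lam \<eta> xiS) > 0))
       \<and> (Re (a020 / a100) > 0 \<longrightarrow>
            Re (lam 0 xiS) = 0 \<and>
            (\<exists>\<delta>>0. \<forall>\<eta> \<xi>. \<bar>\<eta>\<bar> < \<delta> \<and> \<bar>\<xi> - xiS\<bar> < \<delta> \<longrightarrow>
                Re (lam \<eta> \<xi>) \<le> Re (lam 0 xiS)))"
proof -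
  have oU: "open U" and dU: "\<And>p. p \<in> U \<Longrightarrow> \<exists>A B C. ((\<lambda>(x, y, z). E x y z) has_derivative (\<lambda>(u, v, w). A * u + B * v + C * w)) (at p)"
    using holo unfolding holo3_def by auto
  define X where "X = complex_of_real xiS"
  obtain r1 where r1: "0 < r1" "ball (lamS, 0, X) r1 \<subseteq> U"
    using oU inU open_contains_ball unfolding X_def by blast
  obtain C0 r where r: "0 < r" and ex: "\<forall>x y z. norm (x - lamS) < r \<and> norm y < r \<and> norm (z - X) < r \<longrightarrow>
      norm (E x y z - (a100 * (x - lamS) + a020 * y ^ 2 + a001 * (z - X)))
        \<le> C0 * (norm (x - lamS) + norm y ^ 2 + norm (z - X)) ^ 2"
    using expansion unfolding X_def by blast
  define C where "C = \<bar>C0\<bar>"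
  have Cnn: "0 \<le> C" by (simp add: C_def)
  define r2 where "r2 = min (r1/3) r"
  have r2p: "0 < r2" using r1 r by (simp add: r2_def)
  have inU2: "(x,y,z) \<in> U" if xyz: "norm (x-lamS) < r2" "norm y < r2" "norm (z-X) < r2" for x y z
  proof -
    have "norm ((x,y,z) - (lamS,0,X)) \<le> norm (x-lamS) + (norm y + norm (z-X))"
    proof -
      have "norm ((x,y,z) - (lamS,0,X)) = norm (x-lamS, y, z-X)" by simp
      also have "\<dots> \<le> norm (x-lamS) + norm (y, z-X)" by (rule norm_Pair_le)
      also have "\<dots> \<le> norm (x-lamS) + (norm y + norm (z-X))" using norm_Pair_le[of y "z-X"] by simp
      finally show ?thesis .
    qed
    also have "\<dots> < r1" using xyz r1 by (simp add: r2_def)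
    finally have "dist (lamS,0,X) (x,y,z) < r1" by (metis dist_commute dist_norm)
    then show ?thesis using r1(2) by auto
  qed
  have dif: "\<And>x y z. norm (x-lamS) < r2 \<Longrightarrow> norm y < r2 \<Longrightarrow> norm (z-X) < r2 \<Longrightarrow>
       \<exists>A B G. ((\<lambda>(x,y,z). E x y z) has_derivative (\<lambda>(u,v,w). A * u + B * v + G * w)) (at (x,y,z))"
    using dU inU2 by blast
  have evn: "\<And>x y z. norm (x-lamS) < r2 \<Longrightarrow> norm y < r2 \<Longrightarrow> norm (z-X) < r2 \<Longrightarrow> E x (-y) z = E x y z"
    using even inU2 by blast
  have expn: "\<And>x y z. norm (x-lamS) < r2 \<Longrightarrow> norm y < r2 \<Longrightarrow> norm (z-X) < r2 \<Longrightarrow>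
       norm (E x y z - (a100*(x-lamS) + a020*y^2 + a001*(z-X))) \<le> C*(norm (x-lamS) + norm y^2 + norm (z-X))^2"
  proof -
    fix x y z :: complex assume xyz: "norm (x-lamS) < r2" "norm y < r2" "norm (z-X) < r2"
    then have "norm (E x y z - (a100*(x-lamS) + a020*y^2 + a001*(z-X))) \<le> C0*(norm (x-lamS) + norm y^2 + norm (z-X))^2"
      using ex r2p by (simp add: r2_def)
    also have "\<dots> \<le> C*(norm (x-lamS) + norm y^2 + norm (z-X))^2"
      by (intro mult_right_mono) (auto simp: C_def)
    finally show "norm (E x y z - (a100*(x-lamS) + a020*y^2 + a001*(z-X))) \<le> C*(norm (x-lamS) + norm y^2 + norm (z-X))^2" .
  qed
  note ctx = r2p Cnn a100_nz dif evn expn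
  obtain \<delta>l rl where \<delta>l: "0 < \<delta>l" "0 < rl" and lr: "\<And>\<eta> \<xi>. \<bar>\<eta>\<bar> < \<delta>l \<Longrightarrow> \<bar>\<xi> - xiS\<bar> < \<delta>l \<Longrightarrow>
      norm (lam \<eta> \<xi> - lamS) < rl \<and> E (lam \<eta> \<xi>) (complex_of_real \<eta>) (complex_of_real \<xi>) = 0 \<and>
      (\<forall>z. norm (z - lamS) < rl \<and> E z (complex_of_real \<eta>) (complex_of_real \<xi>) = 0 \<longrightarrow> z = lam \<eta> \<xi>)"
    using lam_root by blast
  define K where "K = (norm a020 + norm a001)/norm a100 + 1"
  have K1: "1 \<le> K" by (simp add: K_def)
  have na: "0 < norm a100" using a100_nz by simp
  have cK: "0 \<le> C*(K+1)^2" using Cnn by simp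
  define m where "m = min (min (r2/K) (rl/K)) (norm a100/(C*(K+1)^2+1))"
  have m0: "0 < m" using r2p \<delta>l K1 na cK by (simp add: m_def)
  have lamc: "norm (lam \<eta> \<xi> - lamS) \<le> K*(\<eta>^2 + \<bar>\<xi> - xiS\<bar>)"
    if ee: "\<bar>\<eta>\<bar> < \<delta>l" "\<bar>\<xi> - xiS\<bar> < \<delta>l" "\<bar>\<eta>\<bar> < r2" "\<bar>\<xi> - xiS\<bar> < r2" "\<eta>^2 + \<bar>\<xi> - xiS\<bar> < m" for \<eta> \<xi>
  proof -
    define \<sigma> where "\<sigma> = \<eta>^2 + \<bar>\<xi> - xiS\<bar>"
    have s0: "0 \<le> \<sigma>" by (simp add: \<sigma>_def)
    have nz: "norm (complex_of_real \<xi> - X) = \<bar>\<xi> - xiS\<bar>"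
      by (simp add: X_def flip: of_real_diff)
    have se: "norm (complex_of_real \<eta>)^2 + norm (complex_of_real \<xi> - X) = \<sigma>"
      by (simp add: nz \<sigma>_def)
    have a1: "K*\<sigma> < r2" using hlp2[of K \<sigma> r2] K1 ee(5) by (simp add: \<sigma>_def m_def)
    have a2: "K*\<sigma> < rl" using hlp2[of K \<sigma> rl] K1 ee(5) by (simp add: \<sigma>_def m_def)
    have a3: "C*(K+1)^2*\<sigma> \<le> norm a100" using hlp1s[OF cK s0, of "norm a100"] ee(5) by (simp add: \<sigma>_def m_def)
    obtain x where x: "norm (x-lamS) \<le> K*\<sigma>" "E x (complex_of_real \<eta>) (complex_of_real \<xi>) = 0"
      using exists_zero[OF ctx, of "complex_of_real \<eta>" "complex_of_real \<xi>" K] ee nz se a1 a3 K_def by auto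
    have "x = lam \<eta> \<xi>" using lr[OF ee(1,2)] x a2 by auto
    then show ?thesis using x \<sigma>_def by simp
  qed
  have P1: "Re (a020 / a100) < 0 \<longrightarrow> (\<exists>\<delta>>0. \<forall>\<eta>::real. \<eta> \<noteq> 0 \<and> \<bar>\<eta>\<bar> < \<delta> \<longrightarrow> Re (lam \<eta> xiS) > 0)"
  proof
    assume q: "Re (a020 / a100) < 0"
    define m1 where "m1 = min m (- Re (a020/a100) * norm a100 / (C*(K+1)^2+1))"
    have t1: "0 < (- Re (a020/a100)) * norm a100" by (rule mult_pos_pos) (use q na in auto)
    have t2: "0 < C*(K+1)^2+1" using cK by linarith
    have "0 < (- Re (a020/a100)) * norm a100 / (C*(K+1)^2+1)" by (rule divide_pos_pos[OF t1 t2])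
    then have m1p: "0 < m1" using m0 by (simp add: m1_def)
    define \<delta> where "\<delta> = min (min 1 m1) (min \<delta>l r2)"
    show "\<exists>\<delta>>0. \<forall>\<eta>::real. \<eta> \<noteq> 0 \<and> \<bar>\<eta>\<bar> < \<delta> \<longrightarrow> Re (lam \<eta> xiS) > 0"
    proof (intro exI[of _ \<delta>] conjI allI impI)
      show "0 < \<delta>" using m1p \<delta>l r2p by (simp add: \<delta>_def)
      fix \<eta> :: real assume "\<eta> \<noteq> 0 \<and> \<bar>\<eta>\<bar> < \<delta>"
      then have e0: "\<eta> \<noteq> 0" and e1: "\<bar>\<eta>\<bar> < \<delta>" by auto
      have "\<eta>^2 \<le> \<bar>\<eta>\<bar>" using e1 by (intro sq_le_abs) (simp add: \<delta>_def)
      then have e2: "\<eta>^2 < m1" using e1 by (simp add: \<delta>_def)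
      have e3: "0 < \<eta>^2" using e0 by simp
      define x where "x = lam \<eta> xiS"
      have ln: "norm (x - lamS) \<le> K*\<eta>^2"
        using lamc[of \<eta> xiS] e1 e2 \<delta>l r2p by (simp add: x_def \<delta>_def m1_def)
      have Ex: "E x (complex_of_real \<eta>) X = 0" using lr[of \<eta> xiS] e1 \<delta>l by (simp add: x_def \<delta>_def X_def)
      have Kr: "K*\<eta>^2 < r2" using hlp2[of K "\<eta>^2" r2] K1 e2 by (simp add: m1_def m_def)
      have "norm (E x (complex_of_real \<eta>) X - (a100*(x-lamS) + a020*(complex_of_real \<eta>)^2 + a001*(X-X))) \<le> C*((K+1)*\<eta>^2)^2"
        by (rule errb[OF ctx]) (use ln Kr e1 r2p in \<open>auto simp: \<delta>_def algebra_simps\<close>)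
      then have "norm (a100*(x-lamS) + a020*(complex_of_real \<eta>)^2) \<le> C*((K+1)*\<eta>^2)^2"
        by (simp only: Ex diff_self mult_zero_right add_0_right diff_0 norm_minus_cancel)
      moreover have "C*((K+1)*\<eta>^2)^2 = (C*(K+1)^2)*(\<eta>^2)^2" by (simp add: power_mult_distrib)
      ultimately have b: "norm (a100*(x-lamS) + a020*complex_of_real (\<eta>^2)) \<le> (C*(K+1)^2)*(\<eta>^2)^2"
        by simp
      have c: "(C*(K+1)^2)*\<eta>^2 < - Re (a020/a100) * norm a100"
        using hlp1s[OF cK, of "\<eta>^2" "- Re (a020/a100) * norm a100"] e2 by (simp add: m1_def)
      have "0 < Re (x - lamS)" by (rule alg1[OF a100_nz e3 b c])
      then show "0 < Re (lam \<eta> xiS)" using imag by (simp add: x_def)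
    qed
  qed
  have P2: "Re (a020 / a100) > 0 \<longrightarrow> Re (lam 0 xiS) = 0 \<and>
            (\<exists>\<delta>>0. \<forall>\<eta> \<xi>. \<bar>\<eta>\<bar> < \<delta> \<and> \<bar>\<xi> - xiS\<bar> < \<delta> \<longrightarrow> Re (lam \<eta> \<xi>) \<le> Re (lam 0 xiS))"
  proof
    assume q: "Re (a020 / a100) > 0"
    have l0: "lam 0 xiS = lamS"
    proof -
      have "norm (lamS - lamS) < rl \<and> E lamS (complex_of_real 0) (complex_of_real xiS) = 0"
        using \<delta>l zero by simp
      moreover have "\<forall>z. norm (z - lamS) < rl \<and> E z (complex_of_real 0) (complex_of_real xiS) = 0 \<longrightarrow> z = lam 0 xiS"
        using lr[of 0 xiS] \<delta>l by simp
      ultimately show ?thesis by metis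
    qed
    have Re0: "Re (lam 0 xiS) = 0" using l0 imag by simp
    define qq where "qq = a020 / a100"
    define cq where "cq = 2*C*(104+16*norm qq)"
    have cq0: "0 \<le> cq" using Cnn by (simp add: cq_def)
    define s where "s = min (min (r2/4) (r2^2/4)) (min (norm a100/(32*C+1)) (Re qq * norm a100/(cq+1)))"
    have s0: "0 < s"
    proof -
      have "0 < Re qq * norm a100" using q na by (simp add: qq_def)
      moreover have "0 < cq + 1" using cq0 by linarith
      moreover have "0 < 32*C+1" using Cnn by linarith
      ultimately show ?thesis using r2p na by (simp add: s_def)
    qed
    have s1: "3 * s < r2" using r2p by (simp add: s_def)
    have s2x: "2 * s < r2" using r2p by (simp add: s_def)
    have s2: "16*C * s \<le> norm a100 / 2"
    proof -
      have "(32*C) * s \<le> norm a100" using hlp1[of "32*C" s "norm a100"] Cnn s0 by (simp add: s_def)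
      then show ?thesis by simp
    qed
    have s4: "cq * s \<le> Re qq * norm a100" using hlp1[OF cq0, of s "Re qq * norm a100"] s0 by (simp add: s_def)
    define R where "R = sqrt s"
    have R0: "0 < R" using s0 by (simp add: R_def)
    have R2: "R^2 = s" using s0 by (simp add: R_def)
    have Rr: "R < r2"
    proof -
      have "s \<le> r2^2/4" unfolding s_def by (meson min.cobounded1 min.cobounded2 order_trans)
      moreover have "0 < r2^2" using r2p by simp
      ultimately have "s < r2^2" by linarith
      then have "sqrt s < sqrt (r2^2)" by (rule real_sqrt_less_mono)
      then show ?thesis using r2p by (simp add: R_def)
    qed
    define s3 where "s3 = min (s/K) (norm a100/(C*(K+1)^2+1))"
    have s3p: "0 < s3" using s0 K1 na cK by (simp add: s3_def)
    have s3a: "K * s3 \<le> s" using hlp3[of K s3 s] K1 by (simp add: s3_def)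
    have s3b: "C*(K+1)^2 * s3 \<le> norm a100" using hlp1[OF cK, of s3 "norm a100"] s3p by (simp add: s3_def)
    obtain h where hh1: "h holomorphic_on ball X s3"
      and hh2: "\<And>z. z \<in> ball X s3 \<Longrightarrow> norm (h z - lamS) \<le> s \<and> E (h z) 0 z = 0"
    proof -
      have "\<exists>h. h holomorphic_on ball X s3 \<and> (\<forall>z\<in>ball X s3. norm (h z - lamS) \<le> s \<and> E (h z) 0 z = 0)"
        by (rule implicit_h[OF ctx s0 s1 s2 K_def s3p s3a s3b]) auto
      then show ?thesis using that by blast
    qed
    define m2 where "m2 = min m (s/K)"
    have m2p: "0 < m2" using m0 s0 K1 by (simp add: m2_def)
    define \<rho>f where "\<rho>f = min (min \<delta>l r2) (min s3 m2)"
    have \<rho>f0: "0 < \<rho>f" using \<delta>l r2p s3p m2p by (simp add: \<rho>f_def)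
    have nzX: "norm (complex_of_real \<xi> - X) = \<bar>\<xi> - xiS\<bar>" for \<xi>
      by (simp add: X_def flip: of_real_diff)
    have hl: "lam 0 \<xi> = h (complex_of_real \<xi>)" if t: "\<bar>\<xi> - xiS\<bar> < \<rho>f" for \<xi>
    proof -
      have t1: "\<bar>\<xi> - xiS\<bar> < \<delta>l" "\<bar>\<xi> - xiS\<bar> < r2" "\<bar>\<xi> - xiS\<bar> < s3" "\<bar>\<xi> - xiS\<bar> < m" "\<bar>\<xi> - xiS\<bar> < s/K"
        using t by (auto simp: \<rho>f_def m2_def)
      have ts: "\<bar>\<xi> - xiS\<bar> \<le> s"
      proof -
        have "s/K \<le> s" using s0 K1 by (simp add: divide_le_eq_1 field_simps)
        then show ?thesis using t1(5) by linarith
      qed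
      have "norm (lam 0 \<xi> - lamS) \<le> K*(0^2 + \<bar>\<xi> - xiS\<bar>)"
        by (rule lamc) (use t1 \<delta>l r2p in auto)
      moreover have "K*\<bar>\<xi> - xiS\<bar> \<le> s" using hlp3[of K "\<bar>\<xi> - xiS\<bar>" s] K1 t1(5) by simp
      ultimately have l1: "norm (lam 0 \<xi> - lamS) \<le> s" by simp
      have l2: "E (lam 0 \<xi>) 0 (complex_of_real \<xi>) = 0" using lr[of 0 \<xi>] t1 \<delta>l by simp
      have xb: "complex_of_real \<xi> \<in> ball X s3" using t1(3) nzX[of \<xi>] by (simp add: dist_norm norm_minus_commute)
      show ?thesis
        by (rule uniq[OF ctx s0 s2x s2, of 0 "complex_of_real \<xi>"]) (use r2p s0 nzX[of \<xi>] ts hh2[OF xb] l1 l2 in auto)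
    qed
    have ballf: "\<bar>x - xiS\<bar> < \<rho>f" if "x \<in> ball xiS \<rho>f" for x
      using that by (simp add: dist_real_def abs_minus_commute)
    have inb: "complex_of_real t \<in> ball X s3" if "\<bar>t - xiS\<bar> < \<rho>f" for t
      using that nzX[of t] by (simp add: \<rho>f_def dist_norm norm_minus_commute)
    have fd: "((\<lambda>\<xi>. Re (lam 0 \<xi>)) has_real_derivative Re (deriv h (complex_of_real t))) (at t)"
      if t: "\<bar>t - xiS\<bar> < \<rho>f" for t
    proof -
      have "(h has_field_derivative deriv h (complex_of_real t)) (at (complex_of_real t))"
        using holomorphic_derivI[OF hh1 open_ball inb[OF t], where T=UNIV] by simp
      then have "((\<lambda>x. h (complex_of_real x)) has_vector_derivative deriv h (complex_of_real t)) (at t)"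
        by (rule has_vector_derivative_real_field)
      then have g: "((\<lambda>x. Re (h (complex_of_real x))) has_field_derivative Re (deriv h (complex_of_real t))) (at t)"
        by (rule has_field_derivative_Re)
      show ?thesis
        by (rule has_field_derivative_transform_within_open[OF g, of "ball xiS \<rho>f"])
          (use t hl ballf in \<open>auto simp: dist_real_def abs_minus_commute\<close>)
    qed
    have dfe: "deriv (\<lambda>\<xi>. Re (lam 0 \<xi>)) t = Re (deriv h (complex_of_real t))" if "\<bar>t - xiS\<bar> < \<rho>f" for t
      using fd[OF that] by (rule DERIV_imp_deriv)
    have hd: "deriv h holomorphic_on ball X s3" by (rule holomorphic_deriv[OF hh1 open_ball])
    have fd2: "(deriv (\<lambda>\<xi>. Re (lam 0 \<xi>)) has_real_derivative Re (deriv (deriv h) X)) (at xiS)"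
    proof -
      have t: "\<bar>xiS - xiS\<bar> < \<rho>f" using \<rho>f0 by simp
      have "(deriv h has_field_derivative deriv (deriv h) (complex_of_real xiS)) (at (complex_of_real xiS))"
        using holomorphic_derivI[OF hd open_ball inb[OF t], where T=UNIV] by simp
      then have "((\<lambda>x. deriv h (complex_of_real x)) has_vector_derivative deriv (deriv h) (complex_of_real xiS)) (at xiS)"
        by (rule has_vector_derivative_real_field)
      then have g: "((\<lambda>x. Re (deriv h (complex_of_real x))) has_field_derivative Re (deriv (deriv h) X)) (at xiS)"
        unfolding X_def by (rule has_field_derivative_Re)
      show ?thesis
        by (rule has_field_derivative_transform_within_open[OF g, of "ball xiS \<rho>f"])
          (use \<rho>f0 dfe ballf in \<open>auto simp: dist_real_def abs_minus_commute\<close>)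
    qed
    have D2: "Re (deriv (deriv h) X) < 0" using d2 DERIV_imp_deriv[OF fd2] by simp
    obtain dR where dR: "0 < dR" "\<And>hh. 0 < hh \<Longrightarrow> hh < dR \<Longrightarrow> deriv (\<lambda>\<xi>. Re (lam 0 \<xi>)) (xiS + hh) < 0"
      using DERIV_neg_dec_right[OF fd2 D2] d1 by auto
    obtain dL where dL: "0 < dL" "\<And>hh. 0 < hh \<Longrightarrow> hh < dL \<Longrightarrow> 0 < deriv (\<lambda>\<xi>. Re (lam 0 \<xi>)) (xiS - hh)"
      using DERIV_neg_dec_left[OF fd2 D2] d1 by auto
    define \<rho>b where "\<rho>b = min \<rho>f (min dR dL)"
    have \<rho>b0: "0 < \<rho>b" using \<rho>f0 dR dL by (simp add: \<rho>b_def)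
    have fD: "DERIV (\<lambda>\<xi>. Re (lam 0 \<xi>)) x :> deriv (\<lambda>\<xi>. Re (lam 0 \<xi>)) x" if "\<bar>x - xiS\<bar> < \<rho>f" for x
      using fd[OF that] dfe[OF that] by simp
    have fle: "Re (lam 0 \<xi>) \<le> 0" if t: "\<bar>\<xi> - xiS\<bar> < \<rho>b" for \<xi>
    proof (cases rule: linorder_cases[of \<xi> xiS])
      case less
      have der: "DERIV (\<lambda>\<xi>. Re (lam 0 \<xi>)) x :> deriv (\<lambda>\<xi>. Re (lam 0 \<xi>)) x" if "\<xi> \<le> x" "x \<le> xiS" for x
      proof -
        have "\<bar>x - xiS\<bar> < \<rho>f" using that t less by (auto simp: \<rho>b_def abs_if)
        then show ?thesis by (rule fD)
      qed
      obtain z where z: "\<xi> < z" "z < xiS"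
        and eq: "Re (lam 0 xiS) - Re (lam 0 \<xi>) = (xiS - \<xi>) * deriv (\<lambda>\<xi>. Re (lam 0 \<xi>)) z"
        using MVT2[OF less der] by blast
      have "0 < deriv (\<lambda>\<xi>. Re (lam 0 \<xi>)) (xiS - (xiS - z))"
        by (rule dL(2)) (use z t less in \<open>auto simp: \<rho>b_def\<close>)
      then have "0 < (xiS - \<xi>) * deriv (\<lambda>\<xi>. Re (lam 0 \<xi>)) z" using less by simp
      then show ?thesis using eq Re0 by linarith
    next
      case equal
      then show ?thesis using Re0 by simp
    next
      case greater
      have der: "DERIV (\<lambda>\<xi>. Re (lam 0 \<xi>)) x :> deriv (\<lambda>\<xi>. Re (lam 0 \<xi>)) x" if "xiS \<le> x" "x \<le> \<xi>" for x
      proof -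
        have "\<bar>x - xiS\<bar> < \<rho>f" using that t greater by (auto simp: \<rho>b_def abs_if)
        then show ?thesis by (rule fD)
      qed
      obtain z where z: "xiS < z" "z < \<xi>"
        and eq: "Re (lam 0 \<xi>) - Re (lam 0 xiS) = (\<xi> - xiS) * deriv (\<lambda>\<xi>. Re (lam 0 \<xi>)) z"
        using MVT2[OF greater der] by blast
      have "deriv (\<lambda>\<xi>. Re (lam 0 \<xi>)) (xiS + (z - xiS)) < 0"
        by (rule dR(2)) (use z t greater in \<open>auto simp: \<rho>b_def\<close>)
      then have "(\<xi> - xiS) * deriv (\<lambda>\<xi>. Re (lam 0 \<xi>)) z < 0" using greater by (simp add: mult_pos_neg)
      then show ?thesis using eq Re0 by linarith
    qed
    define \<delta>2 where "\<delta>2 = min (min (min 1 \<delta>l) (min r2 (R/2))) (min \<rho>b (m2/2))"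
    have \<delta>20: "0 < \<delta>2" using \<delta>l r2p R0 \<rho>b0 m2p by (simp add: \<delta>2_def)
    show "Re (lam 0 xiS) = 0 \<and>
            (\<exists>\<delta>>0. \<forall>\<eta> \<xi>. \<bar>\<eta>\<bar> < \<delta> \<and> \<bar>\<xi> - xiS\<bar> < \<delta> \<longrightarrow> Re (lam \<eta> \<xi>) \<le> Re (lam 0 xiS))"
    proof (intro conjI Re0 exI[of _ \<delta>2] \<delta>20 allI impI)
      fix \<eta> \<xi> :: real assume "\<bar>\<eta>\<bar> < \<delta>2 \<and> \<bar>\<xi> - xiS\<bar> < \<delta>2"
      then have e1: "\<bar>\<eta>\<bar> < \<delta>2" and e2: "\<bar>\<xi> - xiS\<bar> < \<delta>2" by auto
      have "\<eta>^2 \<le> \<bar>\<eta>\<bar>" using e1 by (intro sq_le_abs) (simp add: \<delta>2_def)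
      then have e3: "\<eta>^2 + \<bar>\<xi> - xiS\<bar> < m2" using e1 e2 by (simp add: \<delta>2_def)
      have Ks: "K*(\<eta>^2 + \<bar>\<xi> - xiS\<bar>) \<le> s" using hlp3[of K _ s] K1 e3 by (simp add: m2_def)
      have "K*(0^2 + \<bar>\<xi> - xiS\<bar>) \<le> K*(\<eta>^2 + \<bar>\<xi> - xiS\<bar>)" by (intro mult_left_mono) (use K1 in auto)
      then have Ks0: "K*(0^2 + \<bar>\<xi> - xiS\<bar>) \<le> s" using Ks by linarith
      define x1 where "x1 = lam \<eta> \<xi>"
      define x0 where "x0 = lam 0 \<xi>"
      have c1: "norm (x1 - lamS) \<le> s"
        using lamc[of \<eta> \<xi>] e1 e2 e3 Ks by (simp add: x1_def \<delta>2_def m2_def)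
      have tm: "\<bar>\<xi> - xiS\<bar> < m"
      proof -
        have "\<bar>\<xi> - xiS\<bar> < m2/2" using e2 by (simp add: \<delta>2_def)
        moreover have "m2 \<le> m" by (simp add: m2_def)
        ultimately show ?thesis using m2p by linarith
      qed
      have c0: "norm (x0 - lamS) \<le> s"
        using lamc[of 0 \<xi>] e2 tm Ks0 \<delta>l r2p by (simp add: x0_def \<delta>2_def)
      have E1: "E x1 (complex_of_real \<eta>) (complex_of_real \<xi>) = 0" using lr[of \<eta> \<xi>] e1 e2 by (simp add: x1_def \<delta>2_def)
      have E0: "E x0 0 (complex_of_real \<xi>) = 0" using lr[of 0 \<xi>] e1 e2 \<delta>l by (simp add: x0_def \<delta>2_def)
      have ts: "\<bar>\<xi> - xiS\<bar> \<le> s"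
      proof -
        have "1 * \<bar>\<xi> - xiS\<bar> \<le> K * \<bar>\<xi> - xiS\<bar>" using K1 by (intro mult_right_mono) auto
        then have "\<bar>\<xi> - xiS\<bar> \<le> K*(0^2 + \<bar>\<xi> - xiS\<bar>)" by simp
        then show ?thesis using Ks0 by linarith
      qed
      have dy: "norm (E x1 (complex_of_real \<eta>) (complex_of_real \<xi>) - E x1 0 (complex_of_real \<xi>) - a020*(complex_of_real \<eta>)^2)
          \<le> 104*C*R^2 * norm (complex_of_real \<eta>)^2"
        by (rule dy_bound[OF ctx R0 Rr]) (use s2x R2 c1 ts nzX[of \<xi>] e1 in \<open>auto simp: \<delta>2_def\<close>)
      have mv: "norm (E x1 0 (complex_of_real \<xi>) - E x0 0 (complex_of_real \<xi>) - a100*(x1-x0)) \<le> 16*C * s * norm (x1-x0)"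
        by (rule mvt_x[OF ctx s0 s2x]) (use s0 r2p ts nzX[of \<xi>] c0 c1 in auto)
      have "a100*(x1-x0) + a020 * complex_of_real (\<eta>^2) =
          - (E x1 (complex_of_real \<eta>) (complex_of_real \<xi>) - E x1 0 (complex_of_real \<xi>) - a020*(complex_of_real \<eta>)^2)
          - (E x1 0 (complex_of_real \<xi>) - E x0 0 (complex_of_real \<xi>) - a100*(x1-x0))"
        using E1 E0 by (simp add: algebra_simps)
      then have "norm (a100*(x1-x0) + a020 * complex_of_real (\<eta>^2)) \<le> 104*C*R^2 * norm (complex_of_real \<eta>)^2 + 16*C * s * norm (x1-x0)"
        using dy mv norm_triangle_ineq4[of "- (E x1 (complex_of_real \<eta>) (complex_of_real \<xi>) - E x1 0 (complex_of_real \<xi>) - a020*(complex_of_real \<eta>)^2)"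
            "E x1 0 (complex_of_real \<xi>) - E x0 0 (complex_of_real \<xi>) - a100*(x1-x0)"]
        by (simp only: norm_minus_cancel)
      then have b: "norm (a100*(x1-x0) + a020 * complex_of_real (\<eta>^2)) \<le> (104*C * s) * \<eta>^2 + (16*C * s) * norm (x1-x0)"
        using R2 by (simp add: algebra_simps)
      have c: "2*(104*C * s + 16*C * s * norm (a020/a100)) \<le> Re (a020/a100) * norm a100"
        using s4 by (simp add: cq_def qq_def algebra_simps)
      have "Re (x1 - x0) \<le> 0"
        by (rule alg2[OF a100_nz _ _ s2 b c]) (use Cnn s0 in auto)
      then show "Re (lam \<eta> \<xi>) \<le> Re (lam 0 xiS)" using fle[of \<xi>] e2 Re0 by (simp add: x1_def x0_def \<delta>2_def)
    qed
  qed
  show ?thesis using P1 P2 by blast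
qed

end
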